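(* Let $d\geq 1$. There exist $e_1,e_2,e_3,e_4\in\mathbb{F}_{2^d}$ such that $t^5+t^4+e_1t^3+e_2t^2+e_3t+e_4$ is irreducible over $\mathbb{F}_{2^d}$ and no three of its (distinct) roots in an algebraic closure sum to $0$. *)

theory Defs
  imports "HOL-Algebra.Algebraic_Closure_Type"
begin

end

theory Submission
  imports Defs
begin

lemma ff_pow_card:
  fixes x :: "'a::{field,finite}"
  shows "x ^ card (UNIV::'a set) = x"
proof (cases "x = 0")
  case False
  have "x * (\<Prod>y\<in>UNIV-{0}. x * y) = x * x ^ (card (UNIV :: 'a set) - 1) * \<Prod>(UNIV-{0})"
    by (simp add: prod.distrib mult_ac)
  also have "x * x ^ (card (UNIV :: 'a set) - 1) = x ^ Suc (card (UNIV :: 'a set) - 1)"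
    by (subst power_Suc) auto
  also have "Suc (card (UNIV :: 'a set) - 1) = card (UNIV :: 'a set)"
    using finite_UNIV_card_ge_0[where ?'a = 'a] by simp
  also have "(\<Prod>y\<in>UNIV-{0}. x * y) = (\<Prod>y\<in>UNIV-{0}. y)"
    by (rule prod.reindex_bij_witness[of _ "\<lambda>y. y / x" "\<lambda>y. x * y"]) (use False in auto)
  finally show ?thesis
    by simp
qed (use finite_UNIV_card_ge_0[where ?'a = 'a] in auto)

lemma ff_char2:
  assumes "card (UNIV::'a::{field,finite} set) = 2 ^ d" "d \<ge> 1"
  shows "(1::'a) + 1 = 0"
proof -
  have "(-1::'a) ^ card (UNIV::'a set) = -1" by (rule ff_pow_card)
  moreover have "even (card (UNIV::'a set))" using assms by simp
  ultimately have "(-1::'a) = 1" by simp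
  thus ?thesis by (metis add.right_inverse)
qed

lemma c2_double: assumes "(1::'b::field) + 1 = 0" shows "x + x = (0::'b)"
proof -
  have "x + x = (1+1) * x" by (simp add: algebra_simps)
  thus ?thesis using assms by simp
qed

lemma c2_neg: assumes "(1::'b::field) + 1 = 0" shows "- x = (x::'b)"
  using c2_double[OF assms, of x] by (metis add_eq_0_iff)

lemma c2_frob_add:
  assumes "(1::'b::field) + 1 = 0"
  shows "((x::'b) + y) ^ (2 ^ n) = x ^ (2 ^ n) + y ^ (2 ^ n)"
proof (induction n)
  case 0 then show ?case by simp
next
  case (Suc n)
  have sq: "(a + b)^2 = a^2 + b^2" for a b :: 'b
  proof -
    have "(a+b)^2 = a^2 + b^2 + (a*b + a*b)" by (simp add: power2_eq_square algebra_simps)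
    thus ?thesis using c2_double[OF assms, of "a*b"] by simp
  qed
  have e: "(2::nat) ^ Suc n = 2 ^ n * 2" by simp
  show ?case unfolding e power_mult Suc sq ..
qed

lemma c2_frob_sum:
  assumes "(1::'b::field) + 1 = 0"
  shows "(\<Sum>i\<in>A. f i) ^ (2 ^ n) = (\<Sum>i\<in>A. (f i :: 'b) ^ (2 ^ n))"
proof (induction A rule: infinite_finite_induct)
  case (insert a A) then show ?case by (simp add: c2_frob_add[OF assms])
qed simp_all

lemma card_set_mset_le1:
  "(\<forall>x. count A x \<le> 1) \<Longrightarrow> card (set_mset A) = size A"
proof (induction A)
  case empty then show ?case by simp
next
  case (add a A)
  have "count A a = 0" using add.prems[rule_format, of a] by simp
  hence "a \<notin># A" by (simp add: count_eq_zero_iff)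
  moreover have "\<forall>x. count A x \<le> 1"
  proof
    fix x show "count A x \<le> 1" using add.prems[rule_format, of x] by (cases "x = a") auto
  qed
  ultimately show ?case using add.IH by simp
qed

lemma card_roots_XN:
  fixes N :: nat
  assumes c2: "(1::'b::alg_closed_field) + 1 = 0" and ev: "even N" and N2: "N \<ge> 2"
  shows "card {x::'b. x ^ N = x} = N"
proof -
  define p :: "'b poly" where "p = monom 1 N + [:0, -1:]"
  have degp: "degree p = N" unfolding p_def
    using N2 by (subst degree_add_eq_left) (auto simp: degree_monom_eq)
  obtain m where Nm: "N = Suc (Suc m)" using N2 by (metis add_2_eq_Suc le_Suc_ex)
  have lcp: "lead_coeff p = 1" unfolding degp unfolding p_def by (simp add: coeff_monom Nm)
  have p0: "p \<noteq> 0" using degp N2 by auto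
  have polyp: "poly p x = x ^ N - x" for x unfolding p_def by (simp add: poly_monom)
  have ofN: "(of_nat N :: 'b) = 0"
  proof -
    obtain k where "N = 2 * k" using ev by blast
    hence "(of_nat N :: 'b) = (1 + 1) * of_nat k" by (simp add: algebra_simps)
    thus ?thesis using c2 by simp
  qed
  have pd: "poly (pderiv p) x = -1" for x
    unfolding p_def by (simp add: pderiv_add pderiv_monom ofN pderiv_pCons)
  obtain A where A: "size A = degree p" "p = smult (lead_coeff p) (\<Prod>x\<in>#A. [:-x, 1:])"
    using alg_closed_imp_factorization[OF p0] by blast
  have pA: "p = (\<Prod>x\<in>#A. [:-x, 1:])" using A(2) lcp by simp
  have roots: "{x::'b. x ^ N = x} = set_mset A"
  proof -
    have "x ^ N = x \<longleftrightarrow> poly p x = 0" for x by (simp add: polyp)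
    also have "poly p x = 0 \<longleftrightarrow> x \<in># A" for x
      by (subst pA) (auto simp: poly_prod_mset prod_mset_zero_iff)
    finally show ?thesis by auto
  qed
  have cnt: "\<forall>x. count A x \<le> 1"
  proof (rule ccontr)
    assume "\<not> (\<forall>x. count A x \<le> 1)"
    then obtain x where cx: "count A x > 1" by (auto simp: not_le)
    hence "x \<in># A" by (metis count_eq_zero_iff not_less_zero gr_implies_not0)
    then obtain A' where A': "A = add_mset x A'" by (metis multi_member_split)
    have "count A' x > 0" using cx A' by simp
    hence "x \<in># A'" by simp
    then obtain B where "A' = add_mset x B" by (metis multi_member_split)
    with A' have B: "A = add_mset x (add_mset x B)" by simp
    define R where "R = (\<Prod>y\<in>#B. [:-y, 1:])"
    define g where "g = [:-x,1:]"
    have g0: "poly g x = 0" by (simp add: g_def)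
    have "p = g * (g * R)" unfolding pA B R_def g_def by (simp add: mult.assoc)
    hence "pderiv p = g * pderiv (g * R) + (g * R) * pderiv g" by (simp only: pderiv_mult)
    hence "poly (pderiv p) x = poly g x * poly (pderiv (g * R)) x + poly g x * poly R x * poly (pderiv g) x"
      by (simp only: poly_add poly_mult mult.assoc)
    hence "poly (pderiv p) x = 0" by (simp add: g0)
    thus False using pd[of x] by simp
  qed
  show ?thesis unfolding roots using card_set_mset_le1[OF cnt] A(1) degp by simp
qed

lemma funpow_add_hom:
  fixes F :: "'k::field \<Rightarrow> 'k"
  assumes "\<And>x y. F (x + y) = F x + (F y :: 'k::field)"
  shows "(F ^^ s) (x + y) = (F ^^ s) x + (F ^^ s) y"
  by (induction s) (simp_all add: assms funpow.simps)

lemma funpow_zero_hom: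
  fixes F :: "'k::field \<Rightarrow> 'k"
  assumes "F 0 = (0 :: 'k::field)"
  shows "(F ^^ s) 0 = 0"
  by (induction s) (simp_all add: assms funpow.simps)

lemma funpow_inj_hom:
  fixes F :: "'k \<Rightarrow> 'k"
  assumes "inj F"
  shows "(F ^^ s) x = (F ^^ s) y \<Longrightarrow> x = y"
proof (induction s)
  case (Suc s)
  have "F ((F ^^ s) x) = F ((F ^^ s) y)" using Suc.prems by (simp add: funpow.simps)
  hence "(F ^^ s) x = (F ^^ s) y" by (rule injD[OF assms])
  thus ?case by (rule Suc.IH)
qed (simp add: funpow.simps)

lemma cyclic_facts:
  fixes b :: "nat \<Rightarrow> 'k::field" and F :: "'k \<Rightarrow> 'k"
  assumes Fadd: "\<And>x y. F (x + y) = F x + F y" and F0: "F 0 = 0" and Finj: "inj F"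
    and bS: "\<And>k. b (Suc k) = F (b k)" and b5: "b 5 = b 0"
    and b10: "b 1 \<noteq> b 0" and t1: "b 0 + b 1 + b 2 \<noteq> 0" and t2: "b 0 + b 1 + b 3 \<noteq> 0"
  shows "\<And>k. b k = b (k mod 5)"
    and "inj_on b {..<5}"
    and "\<And>i j k. i < 5 \<Longrightarrow> j < 5 \<Longrightarrow> k < 5 \<Longrightarrow> i \<noteq> j \<Longrightarrow> j \<noteq> k \<Longrightarrow> i \<noteq> k
           \<Longrightarrow> b i + b j + b k \<noteq> 0"
proof -
  have shift: "b (k + s) = (F ^^ s) (b k)" for k s
    by (induction s) (simp_all add: bS)
  have per5: "b (k + 5) = b k" for k
    using shift[of 5 k] shift[of 0 k] b5 by (simp add: add.commute)
  show per: "b k = b (k mod 5)" for k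
  proof (induction k rule: less_induct)
    case (less k)
    show ?case
    proof (cases "k < 5")
      case False
      then obtain m where "k = m + 5" by (metis add.commute le_Suc_ex not_less)
      thus ?thesis using less[of m] per5[of m] by simp
    qed simp
  qed
  have trip: "b s + b (s+1) + b (s+2) \<noteq> 0" "b s + b (s+1) + b (s+3) \<noteq> 0" for s
  proof -
    have "b s + b (s+1) + b (s+2) = (F ^^ s) (b 0 + b 1 + b 2)"
      using shift[of 0 s] shift[of 1 s] shift[of 2 s] by (simp add: funpow_add_hom Fadd add.commute)
    moreover have "(F ^^ s) (b 0 + b 1 + b 2) \<noteq> 0"
      using funpow_inj_hom[OF Finj, of s _ 0] funpow_zero_hom[of F, OF F0] t1 by metis
    ultimately show "b s + b (s+1) + b (s+2) \<noteq> 0" by simp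
    have "b s + b (s+1) + b (s+3) = (F ^^ s) (b 0 + b 1 + b 3)"
      using shift[of 0 s] shift[of 1 s] shift[of 3 s] by (simp add: funpow_add_hom Fadd add.commute)
    moreover have "(F ^^ s) (b 0 + b 1 + b 3) \<noteq> 0"
      using funpow_inj_hom[OF Finj, of s _ 0] funpow_zero_hom[of F, OF F0] t2 by metis
    ultimately show "b s + b (s+1) + b (s+3) \<noteq> 0" by simp
  qed
  have b5' : "b 5 = b 0" "b 6 = b 1" "b 7 = b 2" using per[of 5] per[of 6] per[of 7] by simp_all
  have T: "b 0 + b 1 + b 2 \<noteq> 0" "b 1 + b 2 + b 3 \<noteq> 0" "b 2 + b 3 + b 4 \<noteq> 0"
          "b 3 + b 4 + b 0 \<noteq> 0" "b 4 + b 0 + b 1 \<noteq> 0"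
          "b 0 + b 1 + b 3 \<noteq> 0" "b 1 + b 2 + b 4 \<noteq> 0" "b 2 + b 3 + b 0 \<noteq> 0"
          "b 3 + b 4 + b 1 \<noteq> 0" "b 4 + b 0 + b 2 \<noteq> 0"
    using trip[of 0] trip[of 1] trip[of 2] trip[of 3] trip[of 4] b5' by (simp_all add: eval_nat_numeral)
  show "b i + b j + b k \<noteq> 0" if "i < 5" "j < 5" "k < 5" "i \<noteq> j" "j \<noteq> k" "i \<noteq> k" for i j k
  proof -
    have r: "x < 5 \<Longrightarrow> x = 0 \<or> x = 1 \<or> x = 2 \<or> x = 3 \<or> x = 4" for x :: nat by auto
    from r[OF that(1)] r[OF that(2)] r[OF that(3)] that(4-6) T show ?thesis
      by (elim disjE) (simp_all add: ac_simps)
  qed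
  show "inj_on b {..<5}"
  proof (rule inj_onI, rule ccontr)
    fix i j assume ij: "i \<in> {..<5}" "j \<in> {..<5}" "b i = b j" "i \<noteq> j"
    have key: "b k = b 0 \<Longrightarrow> 0 < k \<Longrightarrow> k < 5 \<Longrightarrow> False" for k
    proof -
      assume bk: "b k = b 0" and k: "0 < k" "k < 5"
      have mult: "b (k * m) = b 0" for m
      proof (induction m)
        case (Suc m)
        have "b (k * Suc m) = (F ^^ (k*m)) (b k)" using shift[of k "k*m"] by (simp add: add.commute)
        also have "\<dots> = (F ^^ (k*m)) (b 0)" using bk by simp
        also have "\<dots> = b (k*m)" using shift[of 0 "k*m"] by simp
        finally show ?case using Suc by simp
      qed simp
      have r: "k = 1 \<or> k = 2 \<or> k = 3 \<or> k = 4" using k by auto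
      have "b 1 = b 0"
      proof -
        from r consider "k = 1" | "k = 2" | "k = 3" | "k = 4" by blast
        then show ?thesis
        proof cases
          case 1 then show ?thesis using bk by simp
        next
          case 2 then show ?thesis using mult[of 3] per[of 6] by simp
        next
          case 3 then show ?thesis using mult[of 2] per[of 6] by simp
        next
          case 4 then show ?thesis using mult[of 4] per[of 16] by simp
        qed
      qed
      thus False using b10 by simp
    qed
    show False
    proof (cases "i < j")
      case True
      have "(F ^^ i) (b (j - i)) = (F ^^ i) (b 0)"
        using shift[of "j-i" i] shift[of 0 i] ij(3) True by simp
      hence "b (j - i) = b 0" by (rule funpow_inj_hom[OF Finj])
      moreover have "j - i < 5" "0 < j - i" using ij(2) True by auto
      ultimately show False using key[of "j - i"] by blast
    next
      case False
      hence ji: "j < i" using ij(4) by simp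
      have "(F ^^ j) (b (i - j)) = (F ^^ j) (b 0)"
        using shift[of "i-j" j] shift[of 0 j] ij(3) ji by simp
      hence "b (i - j) = b 0" by (rule funpow_inj_hom[OF Finj])
      moreover have "i - j < 5" "0 < i - j" using ij(1) ji by auto
      ultimately show False using key[of "i - j"] by blast
    qed
  qed
qed

lemma map_poly_add_hom:
  fixes f :: "'b::comm_ring_1 \<Rightarrow> 'c::comm_ring_1"
  assumes f0: "f 0 = 0" and fa: "\<And>x y. f (x + y) = f x + f y"
  shows "map_poly f (p + q) = map_poly f p + map_poly f q"
  by (intro poly_eqI) (simp add: coeff_map_poly f0 fa)

lemma map_poly_mult_hom:
  fixes f :: "'b::comm_ring_1 \<Rightarrow> 'c::comm_ring_1"
  assumes f0: "f 0 = 0" and fa: "\<And>x y. f (x + y) = f x + f y" and fm: "\<And>x y. f (x * y) = f x * f y"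
  shows "map_poly f (p * q) = map_poly f p * map_poly f q"
proof (induction p)
  case 0 then show ?case by simp
next
  case (pCons a p)
  have "map_poly f (pCons a p * q) = map_poly f (smult a q + pCons 0 (p * q))"
    by simp
  also have "\<dots> = smult (f a) (map_poly f q) + pCons 0 (map_poly f p * map_poly f q)"
    by (simp add: map_poly_add_hom[OF f0 fa] map_poly_smult f0 fm map_poly_pCons pCons.IH)
  also have "\<dots> = map_poly f (pCons a p) * map_poly f q"
    by (simp add: map_poly_pCons f0)
  finally show ?case .
qed

lemma poly_map_poly_hom:
  fixes f :: "'b::comm_ring_1 \<Rightarrow> 'c::comm_ring_1"
  assumes f0: "f 0 = 0" and fa: "\<And>x y. f (x + y) = f x + f y" and fm: "\<And>x y. f (x * y) = f x * f y"
  shows "poly (map_poly f p) (f y) = f (poly p y)"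
  by (induction p) (simp_all add: map_poly_pCons f0 fa fm)

lemma roots_bound:
  fixes c :: "'b::field poly"
  assumes "degree c < n"
  shows "finite {x. x ^ n + poly c x = 0} \<and> card {x. x ^ n + poly c x = 0} \<le> n"
proof -
  define p where "p = monom 1 n + c"
  have dp: "degree p = n" unfolding p_def using assms
    by (subst degree_add_eq_left) (auto simp: degree_monom_eq)
  have p0: "p \<noteq> 0"
  proof
    assume "p = 0"
    hence "coeff p n = 0" by simp
    moreover have "coeff p n = 1" unfolding p_def using assms by (simp add: coeff_eq_0)
    ultimately show False by simp
  qed
  have e: "{x. x ^ n + poly c x = 0} = {x. poly p x = 0}" by (simp add: p_def poly_monom)
  show ?thesis unfolding e using poly_roots_finite[OF p0] card_poly_roots_bound[OF p0] dp by simp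
qed

lemma prod5_expand: fixes b :: "nat \<Rightarrow> 'b::field"
  shows "(\<Prod>i<5. [:-b i, 1:]) = [:-b 0,1:]*[:-b 1,1:]*[:-b 2,1:]*[:-b 3,1:]*[:-b 4,1:]"
  by (simp add: numeral_eq_Suc lessThan_Suc mult_ac)

lemma prod5_coeffs: fixes b0 b1 b2 b3 b4 :: "'b::field"
  defines "P \<equiv> [:-b0,1:]*[:-b1,1:]*[:-b2,1:]*[:-b3,1:]*[:-b4,1:]"
  shows "coeff P 5 = 1" "coeff P 4 = -(b0+b1+b2+b3+b4)" "degree P = 5"
  unfolding P_def by (simp_all add: algebra_simps degree_mult_eq eval_nat_numeral)

theorem proposition7p11:
  fixes d :: nat
  assumes "d \<ge> 1"
    and "card (UNIV :: 'a set) = 2 ^ d"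
  shows "\<exists>e1 e2 e3 e4 :: 'a::{field,finite}.
           irreducible [:e4, e3, e2, e1, 1, 1:] \<and>
           (\<forall>x y z :: 'a alg_closure.
              poly (map_poly to_ac [:e4, e3, e2, e1, 1, 1:]) x = 0 \<and>
              poly (map_poly to_ac [:e4, e3, e2, e1, 1, 1:]) y = 0 \<and>
              poly (map_poly to_ac [:e4, e3, e2, e1, 1, 1:]) z = 0 \<and>
              x \<noteq> y \<and> y \<noteq> z \<and> x \<noteq> z \<longrightarrow> x + y + z \<noteq> 0)"
proof -
  define q where "q = card (UNIV::'a set)"
  have q: "q = 2^d" using assms(2) q_def by simp
  have q2: "q \<ge> 2"
  proof -
    have "(2::nat)^1 \<le> 2^d" using assms(1) by (rule power_increasing) simp
    thus ?thesis using q by simp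
  qed
  have evq: "even q" using q assms(1) by simp
  have c2a: "(1::'a) + 1 = 0" by (rule ff_char2[OF assms(2) assms(1)])
  have c2: "(1::'a alg_closure) + 1 = 0" by (metis c2a to_ac_0 to_ac_1 to_ac_add)
  have fadd: "(x + y)^(q^k) = x^(q^k) + y^(q^k)" for x y :: "'a alg_closure" and k
  proof -
    have "q^k = 2^(d*k)" by (simp add: q power_mult)
    thus ?thesis using c2_frob_add[OF c2] by simp
  qed
  have fadd1: "(x + y)^q = x^q + y^q" for x y :: "'a alg_closure"
    using fadd[of x y 1] by simp
  have negK: "- x = (x::'a alg_closure)" for x by (rule c2_neg[OF c2])
  have fixK: "x ^ q = x \<longleftrightarrow> x \<in> range to_ac" for x :: "'a alg_closure"
  proof -
    define R where "R = {x::'a alg_closure. x ^ q = x}"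
    have cR: "card R = q" unfolding R_def using card_roots_XN[OF c2 evq q2] .
    have fR: "finite R" using q2 cR by (intro card_ge_0_finite) simp
    have sub: "range to_ac \<subseteq> R"
    proof
      fix y assume "y \<in> range (to_ac :: 'a \<Rightarrow> _)"
      then obtain a where "y = to_ac a" by blast
      have aq: "a ^ q = a" unfolding q_def by (rule ff_pow_card)
      have "to_ac a ^ q = to_ac (a ^ q)" by simp
      also have "\<dots> = to_ac a" using aq by simp
      finally show "y \<in> R" unfolding R_def using \<open>y = to_ac a\<close> by simp
    qed
    have "card (range (to_ac :: 'a \<Rightarrow> 'a alg_closure)) = q"
      unfolding q_def by (simp add: card_image inj_to_ac)
    hence "range to_ac = R" using card_subset_eq[OF fR sub] cR by simp
    thus ?thesis unfolding R_def by blast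
  qed
  have q0: "q > 0" using q2 by simp
  have Finj: "inj (\<lambda>x::'a alg_closure. x ^ q)"
  proof (rule injI)
    fix x y :: "'a alg_closure" assume "x ^ q = y ^ q"
    have "(x + y) ^ q = x ^ q + x ^ q" using fadd1[of x y] \<open>x ^ q = y ^ q\<close> by simp
    also have "\<dots> = 0" by (rule c2_double[OF c2])
    finally have "x + y = 0" using q0 by simp
    hence "x = - y" by (simp add: eq_neg_iff_add_eq_0)
    thus "x = y" using negK[of y] by simp
  qed
  have q5: "q^5 \<ge> 2"
  proof -
    have "q^1 \<le> q^5" using q2 by (intro power_increasing) auto
    thus ?thesis using q2 by simp
  qed
  have cardS: "card {x::'a alg_closure. x^(q^5) = x} = q^5"
    by (rule card_roots_XN[OF c2 _ q5]) (use evq in simp)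
  have ineq: "q^2 \<ge> 2*q" "q^3 \<ge> 2*q^2" "q^4 \<ge> 2*q^3" "q^5 \<ge> 2*q^4"
    using mult_right_mono[OF q2, of q] mult_right_mono[OF q2, of "q^2"]
      mult_right_mono[OF q2, of "q^3"] mult_right_mono[OF q2, of "q^4"]
    by (simp_all add: power2_eq_square power3_eq_cube eval_nat_numeral mult_ac)
  have numer: "q + q^4 + q^2 + q^3 < q^5" using ineq q2 by linarith
  have lt: "q < q^2" "q^2 < q^3" "q^3 < q^4"
    using power_strict_increasing[of 1 2 q] power_strict_increasing[of 2 3 q]
      power_strict_increasing[of 3 4 q] q2 by simp_all
  define p1 :: "'a alg_closure poly" where "p1 = [:0, -1:]"
  define p3 :: "'a alg_closure poly" where "p3 = monom 1 q + [:0, 1:]"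
  define p2 :: "'a alg_closure poly" where "p2 = monom 1 (q^3) + monom 1 (q^2) + p3"
  have dp1: "degree p1 < q" unfolding p1_def using q2 by simp
  have dp3: "degree p3 \<le> q" unfolding p3_def using q2
    by (intro degree_add_le) (simp_all add: degree_monom_le)
  have dp3': "degree p3 < q^2" "degree p3 < q^3" using dp3 lt by simp_all
  have "degree p2 \<le> q^3" unfolding p2_def
  proof (intro degree_add_le)
    show "degree (monom (1::'a alg_closure) (q^3)) \<le> q^3" by (rule degree_monom_le)
    show "degree (monom (1::'a alg_closure) (q^2)) \<le> q^3"
      using degree_monom_le[of "1::'a alg_closure" "q^2"] lt by linarith
    show "degree p3 \<le> q^3" using dp3 lt by linarith
  qed
  hence dp2: "degree p2 < q^4" using lt by linarith
  note r1 = roots_bound[OF dp1] and r2 = roots_bound[OF dp2]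
    and r3 = roots_bound[OF dp3'(1)] and r4 = roots_bound[OF dp3'(2)]
  define S where "S = {x::'a alg_closure. x^(q^5) = x}"
  define B1 where "B1 = {x::'a alg_closure. x ^ q + poly p1 x = 0}"
  define B2 where "B2 = {x::'a alg_closure. x ^ (q^4) + poly p2 x = 0}"
  define B3 where "B3 = {x::'a alg_closure. x ^ (q^2) + poly p3 x = 0}"
  define B4 where "B4 = {x::'a alg_closure. x ^ (q^3) + poly p3 x = 0}"
  have "\<not> S \<subseteq> B1 \<union> B2 \<union> B3 \<union> B4"
  proof
    assume sub: "S \<subseteq> B1 \<union> B2 \<union> B3 \<union> B4"
    have fin: "finite (B1 \<union> B2 \<union> B3 \<union> B4)"
      using r1 r2 r3 r4 unfolding B1_def B2_def B3_def B4_def by simp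
    have "q^5 = card S" using cardS S_def by simp
    also have "\<dots> \<le> card (B1 \<union> B2 \<union> B3 \<union> B4)" by (rule card_mono[OF fin sub])
    also have "\<dots> \<le> card B1 + card B2 + card B3 + card B4"
      by (meson add_le_mono card_Un_le le_trans order_refl)
    also have "\<dots> \<le> q + q^4 + q^2 + q^3"
      using r1 r2 r3 r4 unfolding B1_def B2_def B3_def B4_def by (intro add_mono) simp_all
    finally show False using numer by simp
  qed
  then obtain \<alpha> where \<alpha>S: "\<alpha> \<in> S" and nB: "\<alpha> \<notin> B1" "\<alpha> \<notin> B2" "\<alpha> \<notin> B3" "\<alpha> \<notin> B4"
    by blast
  define a where "a k = \<alpha> ^ (q^k)" for k
  have aS: "a (Suc k) = a k ^ q" for k unfolding a_def by (simp add: power_mult[symmetric] mult.commute)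
  have a5: "a 5 = a 0" using \<alpha>S unfolding a_def S_def by simp
  have a10: "a 1 \<noteq> a 0" using nB(1) unfolding a_def B1_def p1_def by simp
  have tr0: "a 0 + a 1 + a 2 + a 3 + a 4 \<noteq> 0"
    using nB(2) unfolding a_def B2_def p2_def p3_def by (simp add: poly_monom ac_simps)
  have tr1: "a 0 + a 1 + a 2 \<noteq> 0"
    using nB(3) unfolding a_def B3_def p3_def by (simp add: poly_monom ac_simps)
  have tr2: "a 0 + a 1 + a 3 \<noteq> 0"
    using nB(4) unfolding a_def B4_def p3_def by (simp add: poly_monom ac_simps)
  define c where "c = a 0 + a 1 + a 2 + a 3 + a 4"
  have c0: "c \<noteq> 0" using tr0 c_def by simp
  have cq: "c ^ q = c"
  proof -
    have "c ^ q = a 1 + a 2 + a 3 + a 4 + a 5" unfolding c_def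
      by (simp add: fadd1 aS[symmetric] eval_nat_numeral)
    thus ?thesis using a5 c_def by (simp add: ac_simps)
  qed
  define b where "b k = a k / c" for k
  have bS: "b (Suc k) = b k ^ q" for k unfolding b_def by (simp add: power_divide aS cq)
  have b5: "b 5 = b 0" unfolding b_def using a5 by simp
  have b10: "b 1 \<noteq> b 0" unfolding b_def using a10 c0 by simp
  have t1: "b 0 + b 1 + b 2 \<noteq> 0" unfolding b_def using tr1 c0 by (simp add: add_divide_distrib[symmetric])
  have t2: "b 0 + b 1 + b 3 \<noteq> 0" unfolding b_def using tr2 c0 by (simp add: add_divide_distrib[symmetric])
  have trb: "b 0 + b 1 + b 2 + b 3 + b 4 = 1" unfolding b_def using c0 c_def
    by (simp add: add_divide_distrib[symmetric])
  note cyc = cyclic_facts[of "\<lambda>x. x ^ q" b, OF fadd1 _ Finj bS b5 b10 t1 t2]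
  have per: "b k = b (k mod 5)" for k using cyc(1) q0 by simp
  have binj: "inj_on b {..<5}" using cyc(2) q0 by simp
  have btrip: "\<And>i j k. i < 5 \<Longrightarrow> j < 5 \<Longrightarrow> k < 5 \<Longrightarrow> i \<noteq> j \<Longrightarrow> j \<noteq> k \<Longrightarrow> i \<noteq> k
           \<Longrightarrow> b i + b j + b k \<noteq> 0" using cyc(3) q0 by simp
  define P where "P = (\<Prod>i<5. [:-b i, 1:] :: 'a alg_closure poly)"
  have Pexp: "P = [:-b 0,1:]*[:-b 1,1:]*[:-b 2,1:]*[:-b 3,1:]*[:-b 4,1:]"
    unfolding P_def by (rule prod5_expand)
  have P5: "coeff P 5 = 1" and degP: "degree P = 5"
    using prod5_coeffs[of "b 0" "b 1" "b 2" "b 3" "b 4"] unfolding Pexp by simp_all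
  have P4: "coeff P 4 = 1"
  proof -
    have "coeff P 4 = -(b 0 + b 1 + b 2 + b 3 + b 4)" unfolding Pexp by (rule prod5_coeffs(2))
    also have "\<dots> = -1" using trb by simp
    also have "\<dots> = 1" by (rule negK)
    finally show ?thesis .
  qed
  have rootsP: "poly P x = 0 \<longleftrightarrow> (\<exists>i<5. x = b i)" for x
    unfolding P_def by (auto simp: poly_prod prod_zero_iff)
  have polyP: "poly P y = (y + b 0)*(y+b 1)*(y+b 2)*(y+b 3)*(y+b 4)" for y
  proof -
    have lin: "poly [:-c,1:] y = y + c" for c :: "'a alg_closure" using negK[of c] by (simp add: add.commute)
    show ?thesis unfolding Pexp by (simp only: poly_mult lin)
  qed
  have bq: "b 0 ^ q = b 1" "b 1 ^ q = b 2" "b 2 ^ q = b 3" "b 3 ^ q = b 4" "b 4 ^ q = b 0"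
    using bS[of 0] bS[of 1] bS[of 2] bS[of 3] bS[of 4] b5 by (simp_all add: eval_nat_numeral)
  have Pfrob: "(poly P y) ^ q = poly P (y ^ q)" for y
    unfolding polyP by (simp only: power_mult_distrib fadd1 bq) (simp only: mult_ac)
  have F0: "(\<lambda>x::'a alg_closure. x ^ q) 0 = 0" using q0 by simp
  have Fm: "(x * y) ^ q = x ^ q * y ^ q" for x y :: "'a alg_closure" by (rule power_mult_distrib)
  have polyF: "poly (map_poly (\<lambda>x. x ^ q) p) (y ^ q) = (poly p y) ^ q" for p and y :: "'a alg_closure"
    using poly_map_poly_hom[of "\<lambda>x. x ^ q", OF F0 fadd1 Fm] by simp
  have big: "q^5 > 5" using ineq q2 by linarith
  have Q: "map_poly (\<lambda>x. x ^ q) P = P"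
  proof (rule ccontr)
    define D where "D = map_poly (\<lambda>x. x ^ q) P - P"
    assume "map_poly (\<lambda>x. x ^ q) P \<noteq> P"
    hence D0: "D \<noteq> 0" unfolding D_def by simp
    have allr: "poly D z = 0" for z
    proof -
      obtain y where y: "y ^ q = z" using nth_root_exists[OF q0, of z] by blast
      show ?thesis unfolding D_def using polyF[of P y] Pfrob[of y] y by simp
    qed
    have dD: "degree D \<le> 5" unfolding D_def
      by (intro degree_diff_le) (use map_poly_degree_leq[of "\<lambda>x. x ^ q" P] degP in simp_all)
    have fin: "finite {z. poly D z = 0}" by (rule poly_roots_finite[OF D0])
    have "S \<subseteq> {z. poly D z = 0}" using allr by auto
    hence "card S \<le> card {z. poly D z = 0}" by (rule card_mono[OF fin])
    also have "\<dots> \<le> degree D" by (rule card_poly_roots_bound[OF D0])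
    finally show False using dD big cardS S_def by simp
  qed
  have coeffin: "coeff P n \<in> range to_ac" for n
  proof -
    have "coeff P n ^ q = coeff (map_poly (\<lambda>x. x ^ q) P) n" using F0 by (simp add: coeff_map_poly)
    also have "\<dots> = coeff P n" using Q by simp
    finally show ?thesis using fixK by blast
  qed
  define f0 where "f0 = map_poly of_ac P"
  have f0coeff: "coeff f0 n = of_ac (coeff P n)" for n by (simp add: f0_def coeff_map_poly)
  have mapf0: "map_poly to_ac f0 = P"
    by (intro poly_eqI) (simp add: f0coeff coeff_map_poly to_ac_of_ac coeffin)
  have of1: "of_ac 1 = (1::'a)" by (rule of_ac_eqI) simp
  have f0exp: "[:coeff f0 0, coeff f0 1, coeff f0 2, coeff f0 3, 1, 1:] = f0"
  proof (rule poly_eqI)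
    fix n
    show "coeff [:coeff f0 0, coeff f0 1, coeff f0 2, coeff f0 3, 1, 1:] n = coeff f0 n"
    proof (cases "n > 5")
      case True
      have "coeff P n = 0" using True degP by (simp add: coeff_eq_0)
      hence "coeff f0 n = 0" by (simp add: f0coeff)
      moreover have "coeff [:coeff f0 0, coeff f0 1, coeff f0 2, coeff f0 3, 1, 1:] n = 0"
        using True by (intro coeff_eq_0) simp
      ultimately show ?thesis by simp
    next
      case False
      hence "n = 0 \<or> n = 1 \<or> n = 2 \<or> n = 3 \<or> n = 4 \<or> n = 5" by auto
      thus ?thesis using P4 P5 of1 by (auto simp: f0coeff eval_nat_numeral)
    qed
  qed
  have degf0: "degree f0 = 5"
    using degree_map_poly[of to_ac f0] mapf0 degP by simp
  have f00: "f0 \<noteq> 0" using degf0 by auto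
  have irr: "irreducible f0"
  proof (rule irreducibleI)
    show "f0 \<noteq> 0" by (rule f00)
    show "\<not> f0 dvd 1" using is_unit_iff_degree[OF f00] degf0 by simp
    fix g h assume gh: "f0 = g * h"
    show "g dvd 1 \<or> h dvd 1"
    proof (rule ccontr)
      assume nu: "\<not> (g dvd 1 \<or> h dvd 1)"
      have g0: "g \<noteq> 0" and h0: "h \<noteq> 0" using gh f00 by auto
      have dg: "degree g > 0" using nu is_unit_iff_degree[OF g0] by auto
      have dh: "degree h > 0" using nu is_unit_iff_degree[OF h0] by auto
      have dsum: "degree g + degree h = 5" using degf0 gh degree_mult_eq[OF g0 h0] by simp
      define G where "G = map_poly to_ac g"
      have degG: "degree G = degree g" unfolding G_def by (rule degree_map_poly) simp
      have G0: "G \<noteq> 0" using degG dg by auto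
      have PG: "P = G * map_poly to_ac h"
        unfolding G_def mapf0[symmetric] gh by (rule map_poly_mult_hom) simp_all
      obtain r where r: "poly G r = 0" using alg_closed_imp_poly_has_root[of G] degG dg by auto
      have "poly P r = 0" using PG r by simp
      then obtain i where i: "i < 5" "r = b i" using rootsP by blast
      have GF: "map_poly (\<lambda>x. x ^ q) G = G"
      proof (rule poly_eqI)
        fix n
        have "coeff G n \<in> range to_ac" unfolding G_def by (simp add: coeff_map_poly)
        hence "coeff G n ^ q = coeff G n" using fixK by blast
        thus "coeff (map_poly (\<lambda>x. x ^ q) G) n = coeff G n" using F0 by (simp add: coeff_map_poly)
      qed
      have Ginv: "poly G y = 0 \<Longrightarrow> poly G (y ^ q) = 0" for y
        using polyF[of G y] GF q0 by simp
      have Gall: "poly G (b (i + m)) = 0" for m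
      proof (induction m)
        case 0 then show ?case using r i by simp
      next
        case (Suc m) then show ?case using Ginv bS[of "i + m"] by simp
      qed
      have Gb: "poly G (b j) = 0" if "j < 5" for j
      proof -
        have "i + (j + 5 - i) = j + 5" using i by simp
        moreover have "(j + 5) mod 5 = j" using that by simp
        moreover have "b (j + 5) = b ((j + 5) mod 5)" by (rule per)
        ultimately have "b (i + (j + 5 - i)) = b j" by simp
        thus ?thesis using Gall[of "j + 5 - i"] by simp
      qed
      have sub: "b ` {..<5} \<subseteq> {x. poly G x = 0}" using Gb by auto
      have "5 = card (b ` {..<5})" using card_image[OF binj] by simp
      also have "\<dots> \<le> card {x. poly G x = 0}" by (rule card_mono[OF poly_roots_finite[OF G0] sub])
      also have "\<dots> \<le> degree G" by (rule card_poly_roots_bound[OF G0])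
      finally show False using degG dsum dh by simp
    qed
  qed
  show ?thesis
  proof (intro exI conjI)
    show "irreducible [:coeff f0 0, coeff f0 1, coeff f0 2, coeff f0 3, 1, 1:]"
      unfolding f0exp by (rule irr)
    show "\<forall>x y z :: 'a alg_closure.
              poly (map_poly to_ac [:coeff f0 0, coeff f0 1, coeff f0 2, coeff f0 3, 1, 1:]) x = 0 \<and>
              poly (map_poly to_ac [:coeff f0 0, coeff f0 1, coeff f0 2, coeff f0 3, 1, 1:]) y = 0 \<and>
              poly (map_poly to_ac [:coeff f0 0, coeff f0 1, coeff f0 2, coeff f0 3, 1, 1:]) z = 0 \<and>
              x \<noteq> y \<and> y \<noteq> z \<and> x \<noteq> z \<longrightarrow> x + y + z \<noteq> 0"
    proof (intro allI impI)
      fix x y z :: "'a alg_closure"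
      assume H: "poly (map_poly to_ac [:coeff f0 0, coeff f0 1, coeff f0 2, coeff f0 3, 1, 1:]) x = 0 \<and>
              poly (map_poly to_ac [:coeff f0 0, coeff f0 1, coeff f0 2, coeff f0 3, 1, 1:]) y = 0 \<and>
              poly (map_poly to_ac [:coeff f0 0, coeff f0 1, coeff f0 2, coeff f0 3, 1, 1:]) z = 0 \<and>
              x \<noteq> y \<and> y \<noteq> z \<and> x \<noteq> z"
      hence H': "poly P x = 0" "poly P y = 0" "poly P z = 0" "x \<noteq> y" "y \<noteq> z" "x \<noteq> z"
        unfolding f0exp mapf0 by simp_all
      obtain i j k where "i < 5" "j < 5" "k < 5" "x = b i" "y = b j" "z = b k"
        using H'(1-3) rootsP by meson
      thus "x + y + z \<noteq> 0" using btrip H'(4-6) by blast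
    qed
  qed
qed

end
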